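(* Let $\theta>0$ and $1\le p,q<\infty$, and let $p'$ be the conjugate exponent of $p$ ($\frac1p+\frac1{p'}=1$). If $g\in l^{q),\theta}(L^p)$ and $f\in l^{q)',\theta}(L^{p'})$, then $gf\in L^1(\mathbb R)$ and $$\int_{\mathbb R}|g(x)f(x)|\,dx\le\|g\|_{p,q),\theta}\,\|f\|_{p',q)',\theta}.$$
   Context: Here the index set is $\mathbb Z$ and $I_k=[k,k+1)$, so functions are defined on $\mathbb R=\bigcup_{k\in\mathbb Z}I_k$. The space $l^{q),\theta}(L^p)$ consists of complex-valued measurable $g$ on $\mathbb R$ with $g\chi_{I_k}\in L^p$ for all $k$ and $\|g\|_{p,q),\theta}:=\sup_{\varepsilon>0}\Big(\varepsilon^{\theta}\sum_{k\in\mathbb Z}\big(\int_{I_k}|g|^p\big)^{\frac{q(1+\varepsilon)}{p}}\Big)^{\frac{1}{q(1+\varepsilon)}}<\infty$. The small Lebesgue sequence space $l^{q)',\theta}$ consists of sequences $y=\{y_k\}_{k\in\mathbb Z}$ with $$\|y\|_{l^{q)',\theta}}:=\inf\Big\{\sum_{j\in\mathbb Z}\inf_{\varepsilon>0}\varepsilon^{\frac{-\theta}{q(1+\varepsilon)}}\Big(\sum_{k\in\mathbb Z}y_{k,j}^{(q(1+\varepsilon))'}\Big)^{\frac{1}{(q(1+\varepsilon))'}}\Big\}<\infty,$$ the outer infimum over all decompositions $|y_k|=\sum_{j\in\mathbb Z}y_{k,j}$ with $y_{k,j}\ge0$, and $(q(1+\varepsilon))'$ the conjugate exponent of $q(1+\varepsilon)$.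 For $1\le r\le\infty$, the auxiliary space $l^{q)',\theta}(L^{r})$ consists of complex-valued measurable $f$ on $\mathbb R$ with $f\chi_{I_k}\in L^{r}$ for all $k$ and $\|f\|_{r,q)',\theta}:=\big\|\{\|f\chi_{I_k}\|_{L^{r}}\}_{k\in\mathbb Z}\big\|_{l^{q)',\theta}}<\infty$ (with $L^\infty$ when $p=1$, $p'=\infty$). *)

theory Defs
  imports "HOL-Analysis.Analysis" "HOL-Probability.Essential_Supremum"
begin

definition Ik :: "int \<Rightarrow> real set" where
  "Ik k = {real_of_int k ..< real_of_int k + 1}"

definition epow :: "ennreal \<Rightarrow> real \<Rightarrow> ennreal" where
  "epow x a = (if x = top then top else ennreal (enn2real x powr a))"

definition conj_exp :: "real \<Rightarrow> real" where
  "conj_exp r = r / (r - 1)"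

definition loc_int :: "real \<Rightarrow> (real \<Rightarrow> complex) \<Rightarrow> int \<Rightarrow> real" where
  "loc_int p g k = (\<integral>x\<in>Ik k. norm (g x) powr p \<partial>lebesgue)"

definition grand_norm :: "real \<Rightarrow> real \<Rightarrow> real \<Rightarrow> (real \<Rightarrow> complex) \<Rightarrow> ennreal" where
  "grand_norm p q \<theta> g =
     (SUP \<epsilon>\<in>{0<..}. epow (ennreal (\<epsilon> powr \<theta>) *
          infsum (\<lambda>k. ennreal (loc_int p g k powr (q * (1 + \<epsilon>) / p))) UNIV)
        (1 / (q * (1 + \<epsilon>))))"

definition in_grand :: "real \<Rightarrow> real \<Rightarrow> real \<Rightarrow> (real \<Rightarrow> complex) \<Rightarrow> bool" where
  "in_grand p q \<theta> g \<longleftrightarrow> g \<in> borel_measurable lebesgue \<and>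
     (\<forall>k. set_integrable lebesgue (Ik k) (\<lambda>x. norm (g x) powr p)) \<and>
     grand_norm p q \<theta> g < top"

definition small_seq_norm :: "real \<Rightarrow> real \<Rightarrow> (int \<Rightarrow> real) \<Rightarrow> ennreal" where
  "small_seq_norm q \<theta> y =
     Inf { infsum (\<lambda>j. INF \<epsilon>\<in>{0<..}.
              ennreal (\<epsilon> powr (- \<theta> / (q * (1 + \<epsilon>)))) *
              epow (infsum (\<lambda>k. ennreal (z k j powr conj_exp (q * (1 + \<epsilon>)))) UNIV)
                   (1 / conj_exp (q * (1 + \<epsilon>)))) UNIV
         | z :: int \<Rightarrow> int \<Rightarrow> real.
           (\<forall>k j. 0 \<le> z k j) \<and> (\<forall>k. ((\<lambda>j. z k j) has_sum \<bar>y k\<bar>) UNIV) }"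

definition loc_Lr :: "real \<Rightarrow> (real \<Rightarrow> complex) \<Rightarrow> int \<Rightarrow> real" where
  "loc_Lr r f k = (\<integral>x\<in>Ik k. norm (f x) powr r \<partial>lebesgue) powr (1 / r)"

definition loc_Linf :: "(real \<Rightarrow> complex) \<Rightarrow> int \<Rightarrow> ereal" where
  "loc_Linf f k = esssup (restrict_space lebesgue (Ik k)) (\<lambda>x. ereal (norm (f x)))"

definition loc_dual :: "real \<Rightarrow> (real \<Rightarrow> complex) \<Rightarrow> int \<Rightarrow> real" where
  "loc_dual p f k = (if p = 1 then real_of_ereal (loc_Linf f k) else loc_Lr (conj_exp p) f k)"

definition small_norm :: "real \<Rightarrow> real \<Rightarrow> real \<Rightarrow> (real \<Rightarrow> complex) \<Rightarrow> ennreal" where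
  "small_norm p q \<theta> f = small_seq_norm q \<theta> (loc_dual p f)"

definition in_small :: "real \<Rightarrow> real \<Rightarrow> real \<Rightarrow> (real \<Rightarrow> complex) \<Rightarrow> bool" where
  "in_small p q \<theta> f \<longleftrightarrow> f \<in> borel_measurable lebesgue \<and>
     (\<forall>k. if p = 1 then loc_Linf f k < \<infinity>
          else set_integrable lebesgue (Ik k) (\<lambda>x. norm (f x) powr conj_exp p)) \<and>
     small_norm p q \<theta> f < top"

end

theory Submission
  imports Defs
begin


lemma holder_nn:
  fixes f g :: "'a \<Rightarrow> real"
  assumes p: "p > 1" and q: "q > 1" and pq: "1/p + 1/q = 1"
    and fm: "f \<in> borel_measurable M" and gm: "g \<in> borel_measurable M"
    and f0: "\<And>x. 0 \<le> f x" and g0: "\<And>x. 0 \<le> g x"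
  shows "(\<integral>\<^sup>+x. ennreal (f x * g x) \<partial>M) \<le>
    epow (\<integral>\<^sup>+x. ennreal (f x powr p) \<partial>M) (1/p) * epow (\<integral>\<^sup>+x. ennreal (g x powr q) \<partial>M) (1/q)"
proof -
  define A where "A = (\<integral>\<^sup>+x. ennreal (f x powr p) \<partial>M)"
  define B where "B = (\<integral>\<^sup>+x. ennreal (g x powr q) \<partial>M)"
  have [measurable]: "f \<in> borel_measurable M" "g \<in> borel_measurable M" using fm gm by auto
  have "(\<integral>\<^sup>+x. ennreal (f x * g x) \<partial>M) \<le> epow A (1/p) * epow B (1/q)"
  proof (cases "A = 0 \<or> B = 0")
    case True
    then have "AE x in M. f x * g x = 0"
    proof
      assume "A = 0"
      then have "AE x in M. ennreal (f x powr p) = 0" unfolding A_def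
        by (subst (asm) nn_integral_0_iff_AE) auto
      then show ?thesis by eventually_elim (use f0 p in auto)
    next
      assume "B = 0"
      then have "AE x in M. ennreal (g x powr q) = 0" unfolding B_def
        by (subst (asm) nn_integral_0_iff_AE) auto
      then show ?thesis by eventually_elim (use g0 q in auto)
    qed
    then have "(\<integral>\<^sup>+x. ennreal (f x * g x) \<partial>M) = 0"
      by (subst nn_integral_0_iff_AE) (auto elim!: eventually_mono)
    then show ?thesis by simp
  next
    case False
    note nz = False
    show ?thesis
    proof (cases "A = top \<or> B = top")
      case True
      have "epow A (1/p) * epow B (1/q) = top"
      proof -
        have "epow A (1/p) \<noteq> 0" using nz p unfolding epow_def
          by (auto simp: enn2real_eq_0_iff)
        moreover have "epow B (1/q) \<noteq> 0" using nz q unfolding epow_def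
          by (auto simp: enn2real_eq_0_iff)
        moreover have "epow A (1/p) = top \<or> epow B (1/q) = top" using True unfolding epow_def by auto
        ultimately show ?thesis by (auto simp: ennreal_mult_eq_top_iff)
      qed
      then show ?thesis by simp
    next
      case False
      then obtain a b where a: "A = ennreal a" "a > 0" and b: "B = ennreal b" "b > 0"
        using nz by (cases A; cases B) auto
      define \<alpha> where "\<alpha> = a powr (1/p)"
      define \<beta> where "\<beta> = b powr (1/q)"
      have \<alpha>p: "\<alpha> > 0" "\<beta> > 0" using a b by (auto simp: \<alpha>_def \<beta>_def)
      have pw: "\<alpha> powr p = a" "\<beta> powr q = b" using a b p q
        by (auto simp: \<alpha>_def \<beta>_def powr_powr)
      have pt: "f x * g x \<le> (\<alpha> * \<beta> / (p * a)) * f x powr p + (\<alpha> * \<beta> / (q * b)) * g x powr q" for x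
      proof -
        have "(f x / \<alpha>) * (g x / \<beta>) \<le> (f x / \<alpha>) powr p / p + (g x / \<beta>) powr q / q"
          by (rule Youngs_inequality) (use p q pq f0 g0 \<alpha>p in auto)
        also have "\<dots> = f x powr p / (p * a) + g x powr q / (q * b)"
          using f0 g0 \<alpha>p pw by (simp add: powr_divide mult.commute)
        finally have "(f x / \<alpha>) * (g x / \<beta>) \<le> f x powr p / (p * a) + g x powr q / (q * b)" .
        then have "\<alpha> * \<beta> * ((f x / \<alpha>) * (g x / \<beta>)) \<le> \<alpha> * \<beta> * (f x powr p / (p * a) + g x powr q / (q * b))"
          using \<alpha>p by (intro mult_left_mono) auto
        then show ?thesis using \<alpha>p by (simp add: field_simps)
      qed
      have c0: "0 \<le> \<alpha> * \<beta> / (p * a)" "0 \<le> \<alpha> * \<beta> / (q * b)" using \<alpha>p a b p q by auto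
      have "(\<integral>\<^sup>+x. ennreal (f x * g x) \<partial>M) \<le>
         (\<integral>\<^sup>+x. ennreal (\<alpha> * \<beta> / (p * a)) * ennreal (f x powr p) + ennreal (\<alpha> * \<beta> / (q * b)) * ennreal (g x powr q) \<partial>M)"
      proof (intro nn_integral_mono)
        fix x
        have "ennreal (f x * g x) \<le> ennreal ((\<alpha> * \<beta> / (p * a)) * f x powr p + (\<alpha> * \<beta> / (q * b)) * g x powr q)"
          using pt by (rule ennreal_leI)
        also have "\<dots> = ennreal (\<alpha> * \<beta> / (p * a)) * ennreal (f x powr p) + ennreal (\<alpha> * \<beta> / (q * b)) * ennreal (g x powr q)"
          by (simp only: ennreal_plus[OF mult_nonneg_nonneg[OF c0(1) powr_ge_zero] mult_nonneg_nonneg[OF c0(2) powr_ge_zero]]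
             ennreal_mult[OF c0(1) powr_ge_zero] ennreal_mult[OF c0(2) powr_ge_zero])
        finally show "ennreal (f x * g x) \<le> ennreal (\<alpha> * \<beta> / (p * a)) * ennreal (f x powr p) + ennreal (\<alpha> * \<beta> / (q * b)) * ennreal (g x powr q)" .
      qed
      also have "\<dots> = ennreal (\<alpha> * \<beta> / (p * a)) * A + ennreal (\<alpha> * \<beta> / (q * b)) * B"
        unfolding A_def B_def by (subst nn_integral_add) (auto simp: nn_integral_cmult)
      also have "\<dots> = ennreal (\<alpha> * \<beta> * (1/p + 1/q))"
        using a b c0 p q \<alpha>p by (simp add: ennreal_mult[symmetric] ennreal_plus[symmetric] field_simps del: ennreal_plus)
      also have "\<dots> = epow A (1/p) * epow B (1/q)"
        using pq a b \<alpha>p by (simp add: epow_def \<alpha>_def \<beta>_def ennreal_mult)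
      finally show ?thesis .
    qed
  qed
  then show ?thesis unfolding A_def B_def .
qed



lemma infsum_nn_int:
  fixes f :: "int \<Rightarrow> ennreal"
  shows "infsum f UNIV = (\<integral>\<^sup>+i. f i \<partial>count_space UNIV)"
proof (rule antisym)
  have inf: "infsum f UNIV = (SUP F\<in>{F. finite F \<and> F \<subseteq> UNIV}. sum f F)"
    by (rule nonneg_infsum_complete) simp
  show "infsum f UNIV \<le> (\<integral>\<^sup>+i. f i \<partial>count_space UNIV)"
    unfolding inf
  proof (rule SUP_least)
    fix F :: "int set" assume "F \<in> {F. finite F \<and> F \<subseteq> UNIV}"
    then have F: "finite F" by auto
    have "sum f F = (\<integral>\<^sup>+i. f i \<partial>count_space F)"
      using F by (simp add: nn_integral_count_space_finite)
    also have "\<dots> = (\<integral>\<^sup>+i. f i * indicator F i \<partial>count_space UNIV)"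
      by (simp add: nn_integral_count_space_indicator)
    also have "\<dots> \<le> (\<integral>\<^sup>+i. f i \<partial>count_space UNIV)"
      by (intro nn_integral_mono) (auto split: split_indicator)
    finally show "sum f F \<le> (\<integral>\<^sup>+i. f i \<partial>count_space UNIV)" .
  qed
  have "(\<integral>\<^sup>+i. f i \<partial>count_space UNIV) = (\<integral>\<^sup>+n. f (int_decode n) \<partial>count_space UNIV)"
    using nn_integral_bij_count_space[of int_decode UNIV UNIV f] bij_int_decode by simp
  also have "\<dots> = (\<Sum>n. f (int_decode n))"
    by (rule nn_integral_count_space_nat)
  also have "\<dots> = (SUP n. \<Sum>i<n. f (int_decode i))"
    by (rule suminf_eq_SUP)
  also have "\<dots> \<le> infsum f UNIV"
  proof (rule SUP_least)
    fix n
    have "(\<Sum>i<n. f (int_decode i)) = sum f (int_decode ` {..<n})"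
      using bij_int_decode by (subst sum.reindex) (auto simp: bij_def inj_on_def)
    also have "\<dots> \<le> (SUP F\<in>{F. finite F \<and> F \<subseteq> UNIV}. sum f F)"
      by (rule SUP_upper) auto
    finally show "(\<Sum>i<n. f (int_decode i)) \<le> infsum f UNIV" unfolding inf .
  qed
  finally show "(\<integral>\<^sup>+i. f i \<partial>count_space UNIV) \<le> infsum f UNIV" .
qed

lemma mult_Inf_ge_ennreal:
  fixes c :: ennreal
  assumes c: "c < top" and S: "S \<noteq> {}" and le: "\<And>s. s \<in> S \<Longrightarrow> x \<le> c * s"
  shows "x \<le> c * Inf S"
proof -
  have "c * Inf S = (INF s\<in>S. c * s)"
  proof (rule continuous_at_Inf_mono)
    show "mono ((*) c)" by (rule monoI) (simp add: mult_left_mono)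
    have "continuous_on UNIV (\<lambda>x. c * x)"
      by (rule ennreal_continuous_on_cmult[OF c]) (rule continuous_on_id)
    then show "continuous (at_right (Inf S)) ((*) c)"
      by (simp add: continuous_on_eq_continuous_within continuous_within_subset) (meson continuous_at_imp_continuous_at_within)
  qed (use S in auto)
  then show ?thesis using le by (auto intro: INF_greatest)
qed

lemma has_sum_ennreal:
  fixes f :: "'a \<Rightarrow> real"
  assumes "(f has_sum s) A" "\<And>x. x \<in> A \<Longrightarrow> 0 \<le> f x"
  shows "infsum (\<lambda>x. ennreal (f x)) A = ennreal s"
proof -
  have s: "s = infsum f A" "f summable_on A" using assms by (auto simp: infsumI summable_on_def)
  have "ennreal (infsum f A) = (SUP F\<in>{F. finite F \<and> F \<subseteq> A}. ennreal (sum f F))"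
    by (rule infsum_nonneg_is_SUPREMUM_ennreal) (use assms s in auto)
  also have "\<dots> = (SUP F\<in>{F. finite F \<and> F \<subseteq> A}. sum (\<lambda>x. ennreal (f x)) F)"
    using assms by (intro SUP_cong refl) (auto intro!: sum_ennreal[symmetric])
  also have "\<dots> = infsum (\<lambda>x. ennreal (f x)) A"
    by (rule nonneg_infsum_complete[symmetric]) simp
  finally show ?thesis using s by simp
qed



lemma epow_cmult:
  assumes c: "c > 0" and s: "s > 0"
  shows "epow (ennreal c * X) s = ennreal (c powr s) * epow X s"
proof (cases "X = top")
  case True
  then show ?thesis using c s by (simp add: epow_def ennreal_mult_top)
next
  case False
  then obtain x where x: "X = ennreal x" "x \<ge> 0" by (cases X) auto
  then show ?thesis using c s
    by (simp add: epow_def ennreal_mult[symmetric] powr_mult del: ennreal_mult_eq_top_iff)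
qed

lemma conj_exp_facts:
  assumes "r > 1"
  shows "conj_exp r > 1" "1 / r + 1 / conj_exp r = 1"
  using assms by (auto simp: conj_exp_def field_simps)

lemma seq_holder:
  fixes a b :: "int \<Rightarrow> real"
  assumes \<theta>: "\<theta> > 0" and q: "q \<ge> 1" and a0: "\<And>k. a k \<ge> 0" and b0: "\<And>k. b k \<ge> 0"
    and G: "G = (SUP \<epsilon>\<in>{0<..}. epow (ennreal (\<epsilon> powr \<theta>) *
          infsum (\<lambda>k. ennreal (a k powr (q * (1 + \<epsilon>)))) UNIV) (1 / (q * (1 + \<epsilon>))))"
    and Gt: "G < top" and Nt: "small_seq_norm q \<theta> b < top"
  shows "infsum (\<lambda>k. ennreal (a k * b k)) UNIV \<le> G * small_seq_norm q \<theta> b"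
  unfolding small_seq_norm_def
proof (rule mult_Inf_ge_ennreal[OF Gt])
  show "{infsum (\<lambda>j. INF \<epsilon>\<in>{0<..}.
              ennreal (\<epsilon> powr (- \<theta> / (q * (1 + \<epsilon>)))) *
              epow (infsum (\<lambda>k. ennreal (z k j powr conj_exp (q * (1 + \<epsilon>)))) UNIV)
                   (1 / conj_exp (q * (1 + \<epsilon>)))) UNIV
         | z :: int \<Rightarrow> int \<Rightarrow> real.
           (\<forall>k j. 0 \<le> z k j) \<and> (\<forall>k. ((\<lambda>j. z k j) has_sum \<bar>b k\<bar>) UNIV) } \<noteq> {}"
    using Nt unfolding small_seq_norm_def by (metis Inf_empty less_irrefl)
next
  fix s assume "s \<in> {infsum (\<lambda>j. INF \<epsilon>\<in>{0<..}.
              ennreal (\<epsilon> powr (- \<theta> / (q * (1 + \<epsilon>)))) *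
              epow (infsum (\<lambda>k. ennreal (z k j powr conj_exp (q * (1 + \<epsilon>)))) UNIV)
                   (1 / conj_exp (q * (1 + \<epsilon>)))) UNIV
         | z :: int \<Rightarrow> int \<Rightarrow> real.
           (\<forall>k j. 0 \<le> z k j) \<and> (\<forall>k. ((\<lambda>j. z k j) has_sum \<bar>b k\<bar>) UNIV) }"
  then obtain z :: "int \<Rightarrow> int \<Rightarrow> real" where z0: "\<And>k j. 0 \<le> z k j"
    and zs: "\<And>k. ((\<lambda>j. z k j) has_sum b k) UNIV"
    and s: "s = infsum (\<lambda>j. INF \<epsilon>\<in>{0<..}.
              ennreal (\<epsilon> powr (- \<theta> / (q * (1 + \<epsilon>)))) *
              epow (infsum (\<lambda>k. ennreal (z k j powr conj_exp (q * (1 + \<epsilon>)))) UNIV)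
                   (1 / conj_exp (q * (1 + \<epsilon>)))) UNIV"
    using b0 by auto
  define W where "W j = (INF \<epsilon>\<in>{0<..}.
              ennreal (\<epsilon> powr (- \<theta> / (q * (1 + \<epsilon>)))) *
              epow (infsum (\<lambda>k. ennreal (z k j powr conj_exp (q * (1 + \<epsilon>)))) UNIV)
                   (1 / conj_exp (q * (1 + \<epsilon>))))" for j
  have s': "s = infsum W UNIV" unfolding s W_def ..
  have step1: "ennreal (a k * b k) = infsum (\<lambda>j. ennreal (a k * z k j)) UNIV" for k
    by (rule has_sum_ennreal[symmetric]) (use has_sum_cmult_right[OF zs[of k], of "a k"] a0 z0 in auto)
  have "infsum (\<lambda>k. ennreal (a k * b k)) UNIV
      = (\<integral>\<^sup>+k. (\<integral>\<^sup>+j. ennreal (a k * z k j) \<partial>count_space UNIV) \<partial>count_space UNIV)"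
    by (simp add: step1 infsum_nn_int)
  also have "\<dots> = (\<integral>\<^sup>+j. (\<integral>\<^sup>+k. ennreal (a k * z k j) \<partial>count_space UNIV) \<partial>count_space UNIV)"
    by (rule nn_integral_count_space_nn_integral) auto
  also have "\<dots> \<le> (\<integral>\<^sup>+j. G * W j \<partial>count_space UNIV)"
  proof (rule nn_integral_mono)
    fix j
    show "(\<integral>\<^sup>+k. ennreal (a k * z k j) \<partial>count_space UNIV) \<le> G * W j"
      unfolding W_def
    proof (rule mult_Inf_ge_ennreal[OF Gt])
      show "(\<lambda>\<epsilon>. ennreal (\<epsilon> powr (- \<theta> / (q * (1 + \<epsilon>)))) *
              epow (infsum (\<lambda>k. ennreal (z k j powr conj_exp (q * (1 + \<epsilon>)))) UNIV)
                   (1 / conj_exp (q * (1 + \<epsilon>)))) ` {0<..} \<noteq> {}" by auto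
    next
      fix t assume "t \<in> (\<lambda>\<epsilon>. ennreal (\<epsilon> powr (- \<theta> / (q * (1 + \<epsilon>)))) *
              epow (infsum (\<lambda>k. ennreal (z k j powr conj_exp (q * (1 + \<epsilon>)))) UNIV)
                   (1 / conj_exp (q * (1 + \<epsilon>)))) ` {0<..}"
      then obtain \<epsilon> :: real where e: "\<epsilon> > 0" and t: "t = ennreal (\<epsilon> powr (- \<theta> / (q * (1 + \<epsilon>)))) *
              epow (infsum (\<lambda>k. ennreal (z k j powr conj_exp (q * (1 + \<epsilon>)))) UNIV)
                   (1 / conj_exp (q * (1 + \<epsilon>)))" by auto
      define r where "r = q * (1 + \<epsilon>)"
      have r: "r > 1"
      proof -
        have "1 + \<epsilon> \<le> q * (1 + \<epsilon>)" using q e mult_right_mono[of 1 q "1 + \<epsilon>"] by simp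
        then show ?thesis using e unfolding r_def by linarith
      qed
      note rc = conj_exp_facts[OF r]
      define X where "X = infsum (\<lambda>k. ennreal (a k powr r)) UNIV"
      define E where "E = infsum (\<lambda>k. ennreal (z k j powr conj_exp r)) UNIV"
      have "(\<integral>\<^sup>+k. ennreal (a k * z k j) \<partial>count_space UNIV)
         \<le> epow X (1/r) * epow E (1/conj_exp r)"
        using holder_nn[OF r rc(1) rc(2), of a "count_space UNIV" "\<lambda>k. z k j"] a0 z0
        by (simp add: X_def E_def infsum_nn_int)
      also have "epow X (1/r) = ennreal (\<epsilon> powr (- \<theta> / r)) * epow (ennreal (\<epsilon> powr \<theta>) * X) (1/r)"
      proof -
        have "epow (ennreal (\<epsilon> powr \<theta>) * X) (1/r) = ennreal ((\<epsilon> powr \<theta>) powr (1/r)) * epow X (1/r)"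
          using e r by (intro epow_cmult) auto
        also have "(\<epsilon> powr \<theta>) powr (1/r) = \<epsilon> powr (\<theta> / r)" using e by (simp add: powr_powr)
        finally have "ennreal (\<epsilon> powr (- \<theta> / r)) * epow (ennreal (\<epsilon> powr \<theta>) * X) (1/r)
            = ennreal (\<epsilon> powr (- \<theta> / r)) * ennreal (\<epsilon> powr (\<theta> / r)) * epow X (1/r)"
          by (simp add: mult.assoc)
        also have "ennreal (\<epsilon> powr (- \<theta> / r)) * ennreal (\<epsilon> powr (\<theta> / r)) = 1"
          using e by (simp add: ennreal_mult[symmetric] powr_add[symmetric])
        finally show ?thesis by simp
      qed
      also have "epow (ennreal (\<epsilon> powr \<theta>) * X) (1/r) \<le> G"
        unfolding G X_def r_def using e by (intro SUP_upper2[of \<epsilon>]) auto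
      finally have "(\<integral>\<^sup>+k. ennreal (a k * z k j) \<partial>count_space UNIV)
         \<le> ennreal (\<epsilon> powr (- \<theta> / r)) * G * epow E (1/conj_exp r)"
        by (simp add: mult_right_mono mult_left_mono)
      then show "(\<integral>\<^sup>+k. ennreal (a k * z k j) \<partial>count_space UNIV) \<le> G * t"
        unfolding t E_def r_def by (simp add: mult_ac)
    qed
  qed
  also have "\<dots> = G * s"
    unfolding s' by (simp add: infsum_nn_int nn_integral_cmult)
  finally show "infsum (\<lambda>k. ennreal (a k * b k)) UNIV \<le> G * s" .
qed



lemma Ik_sets[measurable]: "Ik k \<in> sets lebesgue"
  unfolding Ik_def by simp

lemma Ik_measure: "emeasure lebesgue (Ik k) = 1"
  unfolding Ik_def by simp

lemma Ik_floor: "x \<in> Ik k \<longleftrightarrow> k = \<lfloor>x\<rfloor>"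
  unfolding Ik_def by (auto simp: floor_eq_iff) linarith+

lemma loc_nn:
  fixes h :: "real \<Rightarrow> real"
  assumes "set_integrable lebesgue (Ik k) h" "\<And>x. 0 \<le> h x"
  shows "(\<integral>\<^sup>+x. ennreal (h x) * indicator (Ik k) x \<partial>lebesgue) = ennreal (\<integral>x\<in>Ik k. h x \<partial>lebesgue)"
proof -
  have "(\<integral>\<^sup>+x. ennreal (h x) * indicator (Ik k) x \<partial>lebesgue) = (\<integral>\<^sup>+x. ennreal (indicator (Ik k) x *\<^sub>R h x) \<partial>lebesgue)"
    by (intro nn_integral_cong) (auto split: split_indicator)
  also have "\<dots> = ennreal (\<integral>x\<in>Ik k. h x \<partial>lebesgue)"
    unfolding set_lebesgue_integral_def
    by (rule nn_integral_eq_integral) (use assms in \<open>auto simp: set_integrable_def\<close>)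
  finally show ?thesis .
qed

lemma loc_int_nonneg: "loc_int p g k \<ge> 0"
  unfolding loc_int_def set_lebesgue_integral_def by (intro integral_nonneg_AE) (auto split: split_indicator)



lemma loc_bound_gt1:
  assumes p: "p > 1" and [measurable]: "g \<in> borel_measurable lebesgue" "f \<in> borel_measurable lebesgue"
    and gi: "set_integrable lebesgue (Ik k) (\<lambda>x. norm (g x) powr p)"
    and fi: "set_integrable lebesgue (Ik k) (\<lambda>x. norm (f x) powr conj_exp p)"
  shows "loc_dual p f k \<ge> 0 \<and> (\<integral>\<^sup>+x. ennreal (norm (g x * f x)) * indicator (Ik k) x \<partial>lebesgue)
           \<le> ennreal (loc_int p g k powr (1/p) * loc_dual p f k)"
proof -
  define p' where "p' = conj_exp p"
  have p': "p' > 1" "1/p + 1/p' = 1" using conj_exp_facts[OF p] by (auto simp: p'_def)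
  define F where "F x = norm (g x) * indicator (Ik k) x" for x
  define H where "H x = norm (f x) * indicator (Ik k) x" for x
  have [measurable]: "F \<in> borel_measurable lebesgue" "H \<in> borel_measurable lebesgue"
    unfolding F_def H_def by measurable
  have h: "(\<integral>\<^sup>+x. ennreal (F x * H x) \<partial>lebesgue) \<le>
    epow (\<integral>\<^sup>+x. ennreal (F x powr p) \<partial>lebesgue) (1/p) * epow (\<integral>\<^sup>+x. ennreal (H x powr p') \<partial>lebesgue) (1/p')"
    by (rule holder_nn[OF p p'(1) p'(2)]) (auto simp: F_def H_def)
  have e1: "(\<integral>\<^sup>+x. ennreal (F x powr p) \<partial>lebesgue) = ennreal (loc_int p g k)"
  proof -
    have "(\<integral>\<^sup>+x. ennreal (F x powr p) \<partial>lebesgue) = (\<integral>\<^sup>+x. ennreal (norm (g x) powr p) * indicator (Ik k) x \<partial>lebesgue)"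
      using p by (intro nn_integral_cong) (auto simp: F_def split: split_indicator)
    also have "\<dots> = ennreal (loc_int p g k)"
      unfolding loc_int_def by (rule loc_nn[OF gi]) auto
    finally show ?thesis .
  qed
  have e2: "(\<integral>\<^sup>+x. ennreal (H x powr p') \<partial>lebesgue) = ennreal (\<integral>x\<in>Ik k. norm (f x) powr p' \<partial>lebesgue)"
  proof -
    have "(\<integral>\<^sup>+x. ennreal (H x powr p') \<partial>lebesgue) = (\<integral>\<^sup>+x. ennreal (norm (f x) powr p') * indicator (Ik k) x \<partial>lebesgue)"
      using p' by (intro nn_integral_cong) (auto simp: H_def split: split_indicator)
    also have "\<dots> = ennreal (\<integral>x\<in>Ik k. norm (f x) powr p' \<partial>lebesgue)"
      by (rule loc_nn) (use fi in \<open>auto simp: p'_def\<close>)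
    finally show ?thesis .
  qed
  have ld: "loc_dual p f k = (\<integral>x\<in>Ik k. norm (f x) powr p' \<partial>lebesgue) powr (1/p')"
    using p by (simp add: loc_dual_def loc_Lr_def p'_def)
  have "(\<integral>\<^sup>+x. ennreal (norm (g x * f x)) * indicator (Ik k) x \<partial>lebesgue) = (\<integral>\<^sup>+x. ennreal (F x * H x) \<partial>lebesgue)"
    by (intro nn_integral_cong) (auto simp: F_def H_def norm_mult split: split_indicator)
  also note h
  also have "epow (\<integral>\<^sup>+x. ennreal (F x powr p) \<partial>lebesgue) (1/p) * epow (\<integral>\<^sup>+x. ennreal (H x powr p') \<partial>lebesgue) (1/p')
      = ennreal (loc_int p g k powr (1/p) * loc_dual p f k)"
  proof -
    have nn2: "0 \<le> (\<integral>x\<in>Ik k. norm (f x) powr p' \<partial>lebesgue)"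
      unfolding set_lebesgue_integral_def by (intro integral_nonneg_AE) (auto split: split_indicator)
    show ?thesis
      unfolding e1 e2 ld epow_def using nn2 loc_int_nonneg[of p g k] by (simp add: ennreal_mult)
  qed
  finally show ?thesis using ld by simp
qed

lemma loc_bound_1:
  assumes [measurable]: "g \<in> borel_measurable lebesgue" "f \<in> borel_measurable lebesgue"
    and gi: "set_integrable lebesgue (Ik k) (\<lambda>x. norm (g x) powr 1)"
    and fi: "loc_Linf f k < \<infinity>"
  shows "loc_dual 1 f k \<ge> 0 \<and> (\<integral>\<^sup>+x. ennreal (norm (g x * f x)) * indicator (Ik k) x \<partial>lebesgue)
           \<le> ennreal (loc_int 1 g k powr (1/1) * loc_dual 1 f k)"
proof -
  define e where "e = loc_Linf f k"
  have AE1: "AE x in restrict_space lebesgue (Ik k). ereal (norm (f x)) \<le> e"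
    unfolding e_def loc_Linf_def by (rule esssup_AE)
  have AE2: "AE x in lebesgue. x \<in> Ik k \<longrightarrow> ereal (norm (f x)) \<le> e"
    using AE1 by (subst (asm) AE_restrict_space_iff) auto
  have e0: "e \<ge> 0"
  proof (rule ccontr)
    assume "\<not> e \<ge> 0"
    then have neg: "e < 0" by simp
    have "AE x in lebesgue. x \<notin> Ik k"
      using AE2
    proof eventually_elim
      case (elim x)
      have z: "0 \<le> ereal (norm (f x))" by simp
      show ?case
      proof
        assume "x \<in> Ik k"
        then have "ereal (norm (f x)) \<le> e" using elim by blast
        with z have "0 \<le> e" by (rule order_trans)
        with neg show False by simp
      qed
    qed
    then have "emeasure lebesgue {x \<in> space lebesgue. x \<in> Ik k} = 0"
      by (subst (asm) AE_iff_measurable[OF _ refl]) auto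
    then show False using Ik_measure by simp
  qed
  obtain b where b: "e = ereal b" "b \<ge> 0" using e0 fi unfolding e_def[symmetric]
    by (cases e) auto
  have ld: "loc_dual 1 f k = b" using b by (simp add: loc_dual_def e_def)
  have "(\<integral>\<^sup>+x. ennreal (norm (g x * f x)) * indicator (Ik k) x \<partial>lebesgue)
      \<le> (\<integral>\<^sup>+x. ennreal b * (ennreal (norm (g x) powr 1) * indicator (Ik k) x) \<partial>lebesgue)"
  proof (rule nn_integral_mono_AE)
    show "AE x in lebesgue. ennreal (norm (g x * f x)) * indicator (Ik k) x \<le> ennreal b * (ennreal (norm (g x) powr 1) * indicator (Ik k) x)"
      using AE2
    proof eventually_elim
      case (elim x)
      show ?case
      proof (cases "x \<in> Ik k")
        case True
        then have "norm (f x) \<le> b" using elim b by auto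
        then have "norm (g x) * norm (f x) \<le> b * norm (g x)"
          by (metis mult.commute mult_left_mono norm_ge_zero)
        then show ?thesis using True b by (simp add: norm_mult ennreal_mult[symmetric] ennreal_leI)
      qed simp
    qed
  qed
  also have "\<dots> = ennreal b * ennreal (loc_int 1 g k)"
  proof -
    have "(\<integral>\<^sup>+x. ennreal b * (ennreal (norm (g x) powr 1) * indicator (Ik k) x) \<partial>lebesgue)
       = ennreal b * (\<integral>\<^sup>+x. ennreal (norm (g x) powr 1) * indicator (Ik k) x \<partial>lebesgue)"
      by (rule nn_integral_cmult) measurable
    then show ?thesis using loc_nn[OF gi] by (simp add: loc_int_def)
  qed
  finally show ?thesis using b ld loc_int_nonneg[of 1 g k] by (simp add: ennreal_mult[symmetric] mult.commute)
qed



theorem theorem3p8: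
  fixes p q \<theta> :: real and g f :: "real \<Rightarrow> complex"
  assumes "\<theta> > 0" and "1 \<le> p" and "1 \<le> q"
    and "in_grand p q \<theta> g" and "in_small p q \<theta> f"
  shows "integrable lebesgue (\<lambda>x. g x * f x) \<and>
         ennreal (\<integral>x. norm (g x * f x) \<partial>lebesgue) \<le> grand_norm p q \<theta> g * small_norm p q \<theta> f"
proof -
  have gm[measurable]: "g \<in> borel_measurable lebesgue"
    and gi: "\<And>k. set_integrable lebesgue (Ik k) (\<lambda>x. norm (g x) powr p)"
    and Gt: "grand_norm p q \<theta> g < top"
    using assms(4) unfolding in_grand_def by auto
  have fm[measurable]: "f \<in> borel_measurable lebesgue"
    and fk: "\<And>k. if p = 1 then loc_Linf f k < \<infinity>
          else set_integrable lebesgue (Ik k) (\<lambda>x. norm (f x) powr conj_exp p)"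
    and Nt: "small_norm p q \<theta> f < top"
    using assms(5) unfolding in_small_def by auto
  define a where "a k = loc_int p g k powr (1/p)" for k
  define b where "b k = loc_dual p f k" for k
  define L where "L k = (\<integral>\<^sup>+x. ennreal (norm (g x * f x)) * indicator (Ik k) x \<partial>lebesgue)" for k
  have loc: "b k \<ge> 0 \<and> L k \<le> ennreal (a k * b k)" for k
  proof (cases "p = 1")
    case True
    have "set_integrable lebesgue (Ik k) (\<lambda>x. norm (g x) powr 1)" using gi[of k] True by simp
    moreover have "loc_Linf f k < \<infinity>" using fk[of k] True by simp
    ultimately show ?thesis using loc_bound_1[OF gm fm] True unfolding a_def b_def L_def by simp
  next
    case False
    then have p1: "p > 1" using assms(2) by simp
    have "set_integrable lebesgue (Ik k) (\<lambda>x. norm (f x) powr conj_exp p)" using fk[of k] False by simp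
    then show ?thesis using loc_bound_gt1[OF p1 gm fm gi] unfolding a_def b_def L_def by simp
  qed
  have a0: "a k \<ge> 0" for k unfolding a_def by simp
  have G: "grand_norm p q \<theta> g = (SUP \<epsilon>\<in>{0<..}. epow (ennreal (\<epsilon> powr \<theta>) *
          infsum (\<lambda>k. ennreal (a k powr (q * (1 + \<epsilon>)))) UNIV) (1 / (q * (1 + \<epsilon>))))"
    unfolding grand_norm_def a_def
    by (intro SUP_cong refl arg_cong2[where f=epow] arg_cong2[where f="(*)"] infsum_cong)
       (simp add: powr_powr)
  have sumb: "infsum (\<lambda>k. ennreal (a k * b k)) UNIV \<le> grand_norm p q \<theta> g * small_norm p q \<theta> f"
    unfolding small_norm_def b_def[symmetric]
    by (rule seq_holder[OF assms(1) assms(3) a0 _ G Gt]) (use loc Nt in \<open>auto simp: small_norm_def b_def\<close>)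
  have pw: "ennreal (norm (g x * f x)) = (\<integral>\<^sup>+k. ennreal (norm (g x * f x)) * indicator (Ik k) x \<partial>count_space UNIV)" for x
  proof -
    have "(\<integral>\<^sup>+k. ennreal (norm (g x * f x)) * indicator (Ik k) x \<partial>count_space UNIV)
        = (\<Sum>k\<in>{\<lfloor>x\<rfloor>}. ennreal (norm (g x * f x)) * indicator (Ik k) x)"
      by (rule nn_integral_count_space') (auto simp: Ik_floor split: split_indicator)
    also have "\<dots> = ennreal (norm (g x * f x))" by (simp add: Ik_floor)
    finally show ?thesis by simp
  qed
  have "(\<integral>\<^sup>+x. ennreal (norm (g x * f x)) \<partial>lebesgue)
      = (\<integral>\<^sup>+x. (\<integral>\<^sup>+k. ennreal (norm (g x * f x)) * indicator (Ik k) x \<partial>count_space UNIV) \<partial>lebesgue)"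
    by (subst pw) simp
  also have "\<dots> = (\<integral>\<^sup>+k. L k \<partial>count_space UNIV)"
    unfolding L_def by (rule nn_integral_count_space_nn_integral) auto
  also have "\<dots> \<le> (\<integral>\<^sup>+k. ennreal (a k * b k) \<partial>count_space UNIV)"
    using loc by (intro nn_integral_mono) auto
  also have "\<dots> = infsum (\<lambda>k. ennreal (a k * b k)) UNIV" by (simp add: infsum_nn_int)
  also note sumb
  finally have bound: "(\<integral>\<^sup>+x. ennreal (norm (g x * f x)) \<partial>lebesgue) \<le> grand_norm p q \<theta> g * small_norm p q \<theta> f" .
  have fin: "grand_norm p q \<theta> g * small_norm p q \<theta> f < top"
    using Gt Nt by (simp add: ennreal_mult_less_top)
  have int: "integrable lebesgue (\<lambda>x. g x * f x)"
    by (rule integrableI_bounded) (use bound fin in auto)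
  have "ennreal (\<integral>x. norm (g x * f x) \<partial>lebesgue) = (\<integral>\<^sup>+x. ennreal (norm (g x * f x)) \<partial>lebesgue)"
    by (rule nn_integral_eq_integral[symmetric]) (use int in auto)
  with bound int show ?thesis by simp
qed

end
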